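(* Let $G$ and $H$ be graphs without isolated vertices. Then the Kronecker double coverings $K_2 \times G$ and $K_2 \times H$ are isomorphic as graphs if and only if the box complexes $B(G)$ and $B(H)$ are isomorphic as posets (ignoring the involutions).
   Context: A graph $G$ is a set $V(G)$ together with a symmetric subset $E(G) \subset V(G)\times V(G)$ (undirected, no multiple edges, loops allowed; graphs may be infinite). For $v \in V(G)$, $N(v)=\{w : (v,w)\in E(G)\}$; $v$ is isolated if $N(v)=\emptyset$. $K_2$ is the graph with $V(K_2)=\{1,2\}$ and $E(K_2)=\{(1,2),(2,1)\}$. The (tensor) product $G\times H$ has vertex set $V(G)\times V(H)$, with $((x,y),(x',y'))$ an edge iff $(x,x')\in E(G)$ and $(y,y')\in E(H)$; $K_2\times G$ is the Kronecker double covering of $G$. The box complex $B(G)$ is the poset of all pairs $(\sigma,\tau)$ of non-empty (possibly infinite) subsets of $V(G)$ with $\sigma\times\tau\subset E(G)$, ordered by $(\sigma,\tau)\le(\sigma',\tau')$ iff $\sigma\subset\sigma'$ and $\tau\subset\tau'$, and equipped with the involution $(\sigma,\tau)\leftrightarrow(\tau,\sigma)$. *)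

theory Defs
  imports Main
begin

text \<open>A graph is a vertex set together with a symmetric edge relation on it
(undirected, loops allowed, possibly infinite).\<close>

type_synonym 'a graph = "'a set \<times> ('a \<times> 'a) set"

definition verts :: "'a graph \<Rightarrow> 'a set" where "verts G = fst G"
definition edges :: "'a graph \<Rightarrow> ('a \<times> 'a) set" where "edges G = snd G"

definition is_graph :: "'a graph \<Rightarrow> bool" where
  "is_graph G \<longleftrightarrow> edges G \<subseteq> verts G \<times> verts G \<and> sym (edges G)"

definition nbhd :: "'a graph \<Rightarrow> 'a \<Rightarrow> 'a set" where
  "nbhd G v = {w. (v, w) \<in> edges G}"

definition no_isolated :: "'a graph \<Rightarrow> bool" where
  "no_isolated G \<longleftrightarrow> (\<forall>v\<in>verts G. nbhd G v \<noteq> {})"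

definition K2 :: "nat graph" where
  "K2 = ({1, 2}, {(1, 2), (2, 1)})"

definition tensor :: "'a graph \<Rightarrow> 'b graph \<Rightarrow> ('a \<times> 'b) graph" where
  "tensor G H = (verts G \<times> verts H,
     {((x, y), (x', y')). (x, x') \<in> edges G \<and> (y, y') \<in> edges H})"

definition graph_iso :: "'a graph \<Rightarrow> 'b graph \<Rightarrow> bool" where
  "graph_iso G H \<longleftrightarrow> (\<exists>f. bij_betw f (verts G) (verts H) \<and>
     (\<forall>x\<in>verts G. \<forall>y\<in>verts G. (x, y) \<in> edges G \<longleftrightarrow> (f x, f y) \<in> edges H))"

definition box :: "'a graph \<Rightarrow> ('a set \<times> 'a set) set" where
  "box G = {(\<sigma>, \<tau>). \<sigma> \<noteq> {} \<and> \<tau> \<noteq> {} \<and> \<sigma> \<subseteq> verts G \<and> \<tau> \<subseteq> verts G \<and> \<sigma> \<times> \<tau> \<subseteq> edges G}"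

definition box_le :: "'a set \<times> 'a set \<Rightarrow> 'a set \<times> 'a set \<Rightarrow> bool" where
  "box_le p q \<longleftrightarrow> fst p \<subseteq> fst q \<and> snd p \<subseteq> snd q"

definition poset_iso :: "'c set \<Rightarrow> ('c \<Rightarrow> 'c \<Rightarrow> bool) \<Rightarrow> 'd set \<Rightarrow> ('d \<Rightarrow> 'd \<Rightarrow> bool) \<Rightarrow> bool" where
  "poset_iso A leA B leB \<longleftrightarrow> (\<exists>f. bij_betw f A B \<and>
     (\<forall>x\<in>A. \<forall>y\<in>A. leA x y \<longleftrightarrow> leB (f x) (f y)))"

end

theory Submission
  imports Defs
begin


definition clique :: "'v set set \<Rightarrow> 'v set set \<Rightarrow> bool" where
  "clique L K \<longleftrightarrow> K \<subseteq> L \<and> (\<forall>a\<in>K. \<forall>b\<in>K. a \<inter> b \<noteq> {})"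
definition maxclique :: "'v set set \<Rightarrow> 'v set set \<Rightarrow> bool" where
  "maxclique L K \<longleftrightarrow> clique L K \<and> (\<forall>K'. clique L K' \<and> K \<subseteq> K' \<longrightarrow> K' = K)"
definition big :: "'v set set \<Rightarrow> bool" where
  "big K \<longleftrightarrow> (\<exists>a\<in>K. \<exists>b\<in>K. a \<noteq> b)"
definition StarP :: "'v set set \<Rightarrow> 'v set set \<Rightarrow> bool" where
  "StarP L S \<longleftrightarrow> (maxclique L S \<and> big S) \<or>
     (\<exists>a\<in>L. S = {a} \<and> \<not>(\<exists>K1 K2. K1 \<noteq> K2 \<and> maxclique L K1 \<and> maxclique L K2 \<and> big K1 \<and> big K2 \<and> a \<in> K1 \<and> a \<in> K2))"
definition ipres :: "('u set \<Rightarrow> 'w set) \<Rightarrow> 'u set set \<Rightarrow> 'w set set \<Rightarrow> bool" where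
  "ipres \<psi> L L' \<longleftrightarrow> bij_betw \<psi> L L' \<and> (\<forall>a\<in>L. \<forall>b\<in>L. a \<inter> b \<noteq> {} \<longleftrightarrow> \<psi> a \<inter> \<psi> b \<noteq> {})"

lemma ipres_inv:
  assumes "ipres \<psi> L L'" shows "ipres (inv_into L \<psi>) L' L"
proof -
  have b: "bij_betw \<psi> L L'" using assms by (simp add: ipres_def)
  have bi: "bij_betw (inv_into L \<psi>) L' L" using b by (rule bij_betw_inv_into)
  have "\<forall>a\<in>L'. \<forall>b\<in>L'. a \<inter> b \<noteq> {} \<longleftrightarrow> inv_into L \<psi> a \<inter> inv_into L \<psi> b \<noteq> {}"
  proof (intro ballI)
    fix a b assume a: "a \<in> L'" and bb: "b \<in> L'"
    have "inv_into L \<psi> a \<in> L" "inv_into L \<psi> b \<in> L" using a bb bi bij_betwE by blast+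
    moreover have "\<psi> (inv_into L \<psi> a) = a" "\<psi> (inv_into L \<psi> b) = b"
      using a bb b by (meson bij_betw_inv_into_right)+
    moreover have "\<forall>a\<in>L. \<forall>b\<in>L. a \<inter> b \<noteq> {} \<longleftrightarrow> \<psi> a \<inter> \<psi> b \<noteq> {}"
      using assms unfolding ipres_def by blast
    ultimately show "a \<inter> b \<noteq> {} \<longleftrightarrow> inv_into L \<psi> a \<inter> inv_into L \<psi> b \<noteq> {}"
      by simp
  qed
  with bi show ?thesis by (simp add: ipres_def)
qed

lemma clique_img:
  assumes "ipres \<psi> L L'" "K \<subseteq> L" shows "clique L' (\<psi>`K) \<longleftrightarrow> clique L K"
proof -
  have "\<psi>`K \<subseteq> L'" using assms unfolding ipres_def by (metis bij_betw_imp_surj_on image_mono)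
  moreover have "(\<forall>a\<in>\<psi>`K. \<forall>b\<in>\<psi>`K. a \<inter> b \<noteq> {}) \<longleftrightarrow> (\<forall>a\<in>K. \<forall>b\<in>K. a \<inter> b \<noteq> {})"
    using assms unfolding ipres_def by (auto simp: subset_iff)
  ultimately show ?thesis using assms(2) unfolding clique_def by blast
qed

lemma maxclique_img:
  assumes ip: "ipres \<psi> L L'" and m: "maxclique L K" shows "maxclique L' (\<psi>`K)"
proof -
  have KL: "K \<subseteq> L" using m by (simp add: maxclique_def clique_def)
  have b: "bij_betw \<psi> L L'" using ip by (simp add: ipres_def)
  have c: "clique L' (\<psi>`K)" using clique_img[OF ip KL] m by (simp add: maxclique_def)
  have "\<forall>K'. clique L' K' \<and> \<psi>`K \<subseteq> K' \<longrightarrow> K' = \<psi>`K"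
  proof (intro allI impI)
    fix K' assume h: "clique L' K' \<and> \<psi>`K \<subseteq> K'"
    hence K'L: "K' \<subseteq> L'" by (simp add: clique_def)
    define K'' where "K'' = inv_into L \<psi> ` K'"
    have K''L: "K'' \<subseteq> L" unfolding K''_def image_subset_iff using K'L bij_betw_imp_surj_on[OF b]
      by (metis inv_into_into subsetD)
    have img: "\<psi>`K'' = K'" unfolding K''_def using K'L b
      by (metis bij_betw_imp_surj_on image_inv_into_cancel)
    have "clique L K''" using clique_img[OF ip K''L] img h by simp
    moreover have "K \<subseteq> K''"
    proof
      fix a assume "a \<in> K"
      hence "\<psi> a \<in> K'" "a \<in> L" using h KL by auto
      thus "a \<in> K''" unfolding K''_def using b
        by (metis bij_betw_inv_into_left image_eqI)
    qed
    ultimately have "K'' = K" using m by (simp add: maxclique_def)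
    thus "K' = \<psi>`K" using img by simp
  qed
  with c show ?thesis by (simp add: maxclique_def)
qed

lemma big_img: assumes "inj_on \<psi> L" "K \<subseteq> L" shows "big (\<psi>`K) \<longleftrightarrow> big K"
proof
  assume "big (\<psi>`K)"
  then obtain x y where "x \<in> K" "y \<in> K" "\<psi> x \<noteq> \<psi> y" unfolding big_def by blast
  thus "big K" unfolding big_def by metis
next
  assume "big K"
  then obtain x y where "x \<in> K" "y \<in> K" "x \<noteq> y" unfolding big_def by blast
  hence "\<psi> x \<noteq> \<psi> y" using assms unfolding inj_on_def by blast
  thus "big (\<psi>`K)" unfolding big_def using \<open>x \<in> K\<close> \<open>y \<in> K\<close> by blast
qed

lemma StarP_img:
  assumes ip: "ipres \<psi> L L'" and SL: "S \<subseteq> L" and st: "StarP L S"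
  shows "StarP L' (\<psi>`S)"
proof -
  have b: "bij_betw \<psi> L L'" using ip by (simp add: ipres_def)
  hence inj: "inj_on \<psi> L" by (simp add: bij_betw_def)
  show ?thesis
  proof (cases "maxclique L S \<and> big S")
    case True
    then show ?thesis using maxclique_img[OF ip] big_img[OF inj SL] unfolding StarP_def by blast
  next
    case False
    then obtain a where a: "a \<in> L" "S = {a}" and
      no: "\<not>(\<exists>K1 K2. K1 \<noteq> K2 \<and> maxclique L K1 \<and> maxclique L K2 \<and> big K1 \<and> big K2 \<and> a \<in> K1 \<and> a \<in> K2)"
      using st unfolding StarP_def by blast
    have ip': "ipres (inv_into L \<psi>) L' L" by (rule ipres_inv[OF ip])
    have b': "bij_betw (inv_into L \<psi>) L' L" using ip' by (simp add: ipres_def)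
    hence inj': "inj_on (inv_into L \<psi>) L'" by (simp add: bij_betw_def)
    have psa: "\<psi> a \<in> L'" using a b bij_betwE by blast
    have inv: "inv_into L \<psi> (\<psi> a) = a" using a b by (meson bij_betw_inv_into_left)
    have "\<not>(\<exists>K1 K2. K1 \<noteq> K2 \<and> maxclique L' K1 \<and> maxclique L' K2 \<and> big K1 \<and> big K2 \<and> \<psi> a \<in> K1 \<and> \<psi> a \<in> K2)"
    proof
      assume "\<exists>K1 K2. K1 \<noteq> K2 \<and> maxclique L' K1 \<and> maxclique L' K2 \<and> big K1 \<and> big K2 \<and> \<psi> a \<in> K1 \<and> \<psi> a \<in> K2"
      then obtain K1 K2 where h: "K1 \<noteq> K2" "maxclique L' K1" "maxclique L' K2" "big K1" "big K2" "\<psi> a \<in> K1" "\<psi> a \<in> K2"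
        by blast
      have s: "K1 \<subseteq> L'" "K2 \<subseteq> L'" using h by (auto simp: maxclique_def clique_def)
      have "inv_into L \<psi> ` K1 \<noteq> inv_into L \<psi> ` K2"
        using h(1) s inj' by (simp add: inj_on_image_eq_iff)
      moreover have "maxclique L (inv_into L \<psi> ` K1)" "maxclique L (inv_into L \<psi> ` K2)"
        using maxclique_img[OF ip'] h by auto
      moreover have "big (inv_into L \<psi> ` K1)" "big (inv_into L \<psi> ` K2)"
        using big_img[OF inj'] s h by auto
      moreover have "a \<in> inv_into L \<psi> ` K1" "a \<in> inv_into L \<psi> ` K2"
        using h(6,7) inv by (metis image_eqI)+
      ultimately show False using no by blast
    qed
    then show ?thesis unfolding StarP_def using a psa by auto
  qed
qed



definition good :: "'v graph \<Rightarrow> ('v \<Rightarrow> bool) \<Rightarrow> bool" where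
  "good X c \<longleftrightarrow> is_graph X \<and> no_isolated X \<and> (\<forall>p q. (p,q) \<in> edges X \<longrightarrow> c p \<noteq> c q)"
definition atoms :: "'v graph \<Rightarrow> 'v set set" where
  "atoms X = {{p,q} | p q. (p,q) \<in> edges X}"
definition star :: "'v graph \<Rightarrow> 'v \<Rightarrow> 'v set set" where
  "star X x = {a \<in> atoms X. x \<in> a}"

lemma good_edge:
  assumes "good X c" "(p,q) \<in> edges X"
  shows "p \<in> verts X" "q \<in> verts X" "(q,p) \<in> edges X" "p \<noteq> q" "c p \<noteq> c q"
  using assms unfolding good_def is_graph_def sym_def by auto

lemma good_notri:
  assumes "good X c" "(p,q) \<in> edges X" "(q,r) \<in> edges X" "(p,r) \<in> edges X" shows False
  using assms unfolding good_def by metis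

lemma atom_pt:
  assumes g: "good X c" and a: "a \<in> atoms X" and x: "x \<in> a"
  shows "\<exists>y. a = {x,y} \<and> (x,y) \<in> edges X \<and> x \<noteq> y"
proof -
  obtain p q where "a = {p,q}" "(p,q) \<in> edges X" using a unfolding atoms_def by blast
  moreover have "(q,p) \<in> edges X" "p \<noteq> q" using good_edge[OF g \<open>(p,q) \<in> edges X\<close>] by auto
  ultimately show ?thesis using x by (auto simp: insert_commute)
qed

lemma atom_two:
  assumes g: "good X c" and a: "a \<in> atoms X" and "u \<in> a" "v \<in> a" "u \<noteq> v"
  shows "a = {u,v}"
  using atom_pt[OF g a assms(3)] assms by auto

lemma atom_edge: "(p,q) \<in> edges X \<Longrightarrow> {p,q} \<in> atoms X"
  unfolding atoms_def by blast

lemma atom_verts: assumes g: "good X c" and a: "a \<in> atoms X" shows "a \<subseteq> verts X"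
  using a good_edge[OF g] unfolding atoms_def by auto

lemma edge_sym_iff: "good X c \<Longrightarrow> (p,q) \<in> edges X \<longleftrightarrow> (q,p) \<in> edges X"
  using good_edge by metis

lemma tri:
  assumes g: "good X c" and a: "a \<in> atoms X" and b: "b \<in> atoms X" and c: "d \<in> atoms X"
    and ab: "a \<noteq> b" and x: "x \<in> a" "x \<in> b" and ca: "d \<inter> a \<noteq> {}" and cb: "d \<inter> b \<noteq> {}"
  shows "x \<in> d"
proof (rule ccontr)
  assume nx: "x \<notin> d"
  obtain q where q: "a = {x,q}" "(x,q) \<in> edges X" using atom_pt[OF g a x(1)] by blast
  obtain s where s: "b = {x,s}" "(x,s) \<in> edges X" using atom_pt[OF g b x(2)] by blast
  have qd: "q \<in> d" using ca nx q by auto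
  have sd: "s \<in> d" using cb nx s by auto
  have "q \<noteq> s" using ab q s by auto
  then have "d = {q,s}" using atom_two[OF g c qd sd] by simp
  then obtain u v where "{q,s} = {u,v}" "(u,v) \<in> edges X" using c unfolding atoms_def by blast
  hence "(q,s) \<in> edges X" using edge_sym_iff[OF g] by (auto simp: doubleton_eq_iff)
  thus False using good_notri[OF g q(2) _ s(2)] edge_sym_iff[OF g] by blast
qed

lemma clique_big_sub:
  assumes g: "good X c" and cl: "clique (atoms X) K" and bg: "big K"
  shows "\<exists>x. K \<subseteq> star X x"
proof -
  obtain a b where ab: "a \<in> K" "b \<in> K" "a \<noteq> b" using bg unfolding big_def by blast
  have KL: "K \<subseteq> atoms X" using cl by (simp add: clique_def)
  obtain x where x: "x \<in> a" "x \<in> b" using cl ab unfolding clique_def by blast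
  have "\<forall>d\<in>K. x \<in> d"
  proof
    fix d assume d: "d \<in> K"
    have "d \<inter> a \<noteq> {}" "d \<inter> b \<noteq> {}" using cl d ab unfolding clique_def by auto
    thus "x \<in> d" using tri[OF g _ _ _ ab(3) x] KL ab d by auto
  qed
  thus ?thesis using KL unfolding star_def by blast
qed

lemma star_clique: "clique (atoms X) (star X x)"
  unfolding clique_def star_def by blast

lemma star_max:
  assumes g: "good X c" and bg: "big (star X x)" shows "maxclique (atoms X) (star X x)"
proof -
  obtain a b where ab: "a \<in> star X x" "b \<in> star X x" "a \<noteq> b" using bg unfolding big_def by blast
  have "\<forall>K'. clique (atoms X) K' \<and> star X x \<subseteq> K' \<longrightarrow> K' = star X x"
  proof (intro allI impI)
    fix K' assume h: "clique (atoms X) K' \<and> star X x \<subseteq> K'"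
    have "K' \<subseteq> star X x"
    proof
      fix d assume d: "d \<in> K'"
      have dL: "d \<in> atoms X" using h d by (auto simp: clique_def)
      have "d \<inter> a \<noteq> {}" "d \<inter> b \<noteq> {}" using h d ab unfolding clique_def by auto
      hence "x \<in> d" using tri[OF g _ _ dL ab(3)] ab unfolding star_def by auto
      thus "d \<in> star X x" using dL by (simp add: star_def)
    qed
    thus "K' = star X x" using h by blast
  qed
  thus ?thesis using star_clique by (simp add: maxclique_def)
qed

lemma maxclique_star:
  assumes g: "good X c" and m: "maxclique (atoms X) K" and bg: "big K"
  shows "\<exists>x\<in>verts X. K = star X x"
proof -
  have "clique (atoms X) K" using m by (simp add: maxclique_def)
  then obtain x where x: "K \<subseteq> star X x" using clique_big_sub[OF g _ bg] by blast
  have mx: "\<forall>K'. clique (atoms X) K' \<and> K \<subseteq> K' \<longrightarrow> K' = K" using m by (simp add: maxclique_def)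
  have "clique (atoms X) (star X x) \<and> K \<subseteq> star X x" using star_clique x by simp
  hence "star X x = K" by (rule mx[rule_format])
  moreover obtain a where "a \<in> K" using bg unfolding big_def by blast
  ultimately have "a \<in> atoms X" "x \<in> a" unfolding star_def by auto
  hence "x \<in> verts X" using atom_verts[OF g] by blast
  thus ?thesis using \<open>star X x = K\<close> by auto
qed

lemma star_ne: assumes g: "good X c" and x: "x \<in> verts X" shows "star X x \<noteq> {}"
proof -
  have "nbhd X x \<noteq> {}" using g x by (simp add: good_def no_isolated_def)
  then obtain y where "(x,y) \<in> edges X" by (auto simp: nbhd_def)
  hence "{x,y} \<in> star X x" unfolding star_def using atom_edge by simp
  thus ?thesis by blast
qed

lemma star_single:
  assumes g: "good X c" and x: "x \<in> verts X" and nb: "\<not> big (star X x)"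
  shows "\<exists>a. star X x = {a}"
  using star_ne[OF g x] nb unfolding big_def by blast

lemma star_inj_big:
  assumes g: "good X c" and bg: "big (star X u)" and eq: "star X u = star X v" shows "u = v"
proof (rule ccontr)
  assume uv: "u \<noteq> v"
  obtain a b where ab: "a \<in> star X u" "b \<in> star X u" "a \<noteq> b" using bg unfolding big_def by blast
  have "a = {u,v}" "b = {u,v}" using ab eq atom_two[OF g _ _ _ uv] unfolding star_def by auto
  thus False using ab by simp
qed

lemma StarP_iff:
  assumes g: "good X c"
  shows "StarP (atoms X) S \<longleftrightarrow> (\<exists>x\<in>verts X. S = star X x)"
proof
  assume st: "StarP (atoms X) S"
  show "\<exists>x\<in>verts X. S = star X x"
  proof (cases "maxclique (atoms X) S \<and> big S")
    case True thus ?thesis using maxclique_star[OF g] by blast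
  next
    case False
    then obtain a where a: "a \<in> atoms X" "S = {a}" and
      no: "\<not>(\<exists>K1 K2. K1 \<noteq> K2 \<and> maxclique (atoms X) K1 \<and> maxclique (atoms X) K2 \<and> big K1 \<and> big K2 \<and> a \<in> K1 \<and> a \<in> K2)"
      using st unfolding StarP_def by blast
    obtain p q where pq: "a = {p,q}" "(p,q) \<in> edges X" using a unfolding atoms_def by blast
    have pv: "p \<in> verts X" "q \<in> verts X" "p \<noteq> q" using good_edge[OF g pq(2)] by auto
    have ap: "a \<in> star X p" "a \<in> star X q" using a pq unfolding star_def by auto
    show ?thesis
    proof (cases "big (star X p)")
      case False
      then obtain a' where "star X p = {a'}" using star_single[OF g pv(1)] by blast
      thus ?thesis using ap a pv by auto
    next
      case bp: True
      show ?thesis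
      proof (cases "big (star X q)")
        case False
        then obtain a' where "star X q = {a'}" using star_single[OF g pv(2)] by blast
        thus ?thesis using ap a pv by auto
      next
        case bq: True
        have "star X p \<noteq> star X q" using star_inj_big[OF g bp] pv by blast
        thus ?thesis using no star_max[OF g] bp bq ap by blast
      qed
    qed
  qed
next
  assume "\<exists>x\<in>verts X. S = star X x"
  then obtain x where x: "x \<in> verts X" "S = star X x" by blast
  show "StarP (atoms X) S"
  proof (cases "big S")
    case True thus ?thesis using star_max[OF g] x unfolding StarP_def by blast
  next
    case False
    then obtain a where a: "S = {a}" using star_single[OF g x(1)] x by blast
    have aL: "a \<in> atoms X" "x \<in> a" using a x unfolding star_def by auto
    have "\<not>(\<exists>K1 K2. K1 \<noteq> K2 \<and> maxclique (atoms X) K1 \<and> maxclique (atoms X) K2 \<and> big K1 \<and> big K2 \<and> a \<in> K1 \<and> a \<in> K2)"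
    proof
      assume "\<exists>K1 K2. K1 \<noteq> K2 \<and> maxclique (atoms X) K1 \<and> maxclique (atoms X) K2 \<and> big K1 \<and> big K2 \<and> a \<in> K1 \<and> a \<in> K2"
      then obtain K1 K2 where h: "K1 \<noteq> K2" "maxclique (atoms X) K1" "maxclique (atoms X) K2" "big K1" "big K2" "a \<in> K1" "a \<in> K2"
        by blast
      obtain u v where uv: "K1 = star X u" "K2 = star X v" using maxclique_star[OF g] h by metis
      have "u \<in> a" "v \<in> a" "u \<noteq> v" using h uv unfolding star_def by auto
      hence "x = u \<or> x = v" using atom_two[OF g aL(1)] aL(2) by blast
      thus False using h uv x False by auto
    qed
    thus ?thesis using a aL unfolding StarP_def by blast
  qed
qed



definition Cset :: "'v graph \<Rightarrow> 'v set set" where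
  "Cset X = {S. \<exists>A B. A \<noteq> {} \<and> B \<noteq> {} \<and> S = A \<union> B \<and> A \<times> B \<subseteq> edges X}"

lemma atom_ne: "a \<in> atoms X \<Longrightarrow> a \<noteq> {}"
  unfolding atoms_def by blast

lemma CsetI: "A \<noteq> {} \<Longrightarrow> B \<noteq> {} \<Longrightarrow> A \<times> B \<subseteq> edges X \<Longrightarrow> A \<union> B \<in> Cset X"
  unfolding Cset_def by blast

lemma atom_C: assumes "a \<in> atoms X" shows "a \<in> Cset X"
proof -
  obtain p q where "a = {p,q}" "(p,q) \<in> edges X" using assms unfolding atoms_def by blast
  moreover have "{p} \<union> {q} \<in> Cset X" by (rule CsetI) (use \<open>(p,q) \<in> edges X\<close> in auto)
  ultimately show ?thesis by (simp add: insert_commute)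
qed

lemma C_nbr:
  assumes g: "good X c" and S: "S \<in> Cset X" and p: "p \<in> S"
  shows "\<exists>q. (p,q) \<in> edges X \<and> q \<in> S"
proof -
  obtain A B where h: "A \<noteq> {}" "B \<noteq> {}" "S = A \<union> B" "A \<times> B \<subseteq> edges X" using S unfolding Cset_def by blast
  show ?thesis
  proof (cases "p \<in> A")
    case True
    obtain q where "q \<in> B" using h by blast
    thus ?thesis using True h by blast
  next
    case False
    hence pB: "p \<in> B" using p h by blast
    obtain q where q: "q \<in> A" using h by blast
    hence "(q,p) \<in> edges X" using pB h by blast
    hence "(p,q) \<in> edges X" using edge_sym_iff[OF g] by blast
    thus ?thesis using q h by blast
  qed
qed

lemma atoms_min:
  assumes g: "good X c"
  shows "a \<in> atoms X \<longleftrightarrow> a \<in> Cset X \<and> (\<forall>b\<in>Cset X. b \<subseteq> a \<longrightarrow> b = a)"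
proof
  assume a: "a \<in> atoms X"
  have "\<forall>b\<in>Cset X. b \<subseteq> a \<longrightarrow> b = a"
  proof (intro ballI impI)
    fix b assume b: "b \<in> Cset X" "b \<subseteq> a"
    obtain x where x: "x \<in> b" using b unfolding Cset_def by blast
    obtain y where y: "(x,y) \<in> edges X" "y \<in> b" using C_nbr[OF g b(1) x] by blast
    have "x \<noteq> y" using good_edge[OF g y(1)] by simp
    hence "a = {x,y}" using atom_two[OF g a] x y b by blast
    thus "b = a" using b x y by blast
  qed
  thus "a \<in> Cset X \<and> (\<forall>b\<in>Cset X. b \<subseteq> a \<longrightarrow> b = a)" using atom_C[OF a] by blast
next
  assume h: "a \<in> Cset X \<and> (\<forall>b\<in>Cset X. b \<subseteq> a \<longrightarrow> b = a)"
  obtain x where x: "x \<in> a" using h unfolding Cset_def by blast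
  obtain y where y: "(x,y) \<in> edges X" "y \<in> a" using C_nbr[OF g _ x] h by blast
  have "{x,y} \<in> Cset X" using atom_C[OF atom_edge[OF y(1)]] .
  moreover have "{x,y} \<subseteq> a" using x y by blast
  ultimately have "{x,y} = a" using h[THEN conjunct2, rule_format] by blast
  thus "a \<in> atoms X" using atom_edge[OF y(1)] by simp
qed

lemma split_atom:
  assumes g: "good X c" and AB: "A \<times> B \<subseteq> edges X" "A \<noteq> {}" "B \<noteq> {}"
    and a: "a \<in> atoms X" "a \<subseteq> A \<union> B"
  shows "\<exists>x y. a = {x,y} \<and> x \<in> A \<and> y \<in> B"
proof -
  obtain p q where pq: "a = {p,q}" "(p,q) \<in> edges X" using a unfolding atoms_def by blast
  have qp: "(q,p) \<in> edges X" using pq(2) edge_sym_iff[OF g] by blast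
  show ?thesis
  proof (cases "p \<in> A")
    case pA: True
    show ?thesis
    proof (cases "q \<in> B")
      case True thus ?thesis using pA pq by blast
    next
      case False
      hence qA: "q \<in> A" using a pq by blast
      obtain z where z: "z \<in> B" using AB by blast
      have "(p,z) \<in> edges X" "(q,z) \<in> edges X" using z pA qA AB by blast+
      thus ?thesis using good_notri[OF g pq(2)] by blast
    qed
  next
    case False
    hence pB: "p \<in> B" using a pq by blast
    show ?thesis
    proof (cases "q \<in> A")
      case True thus ?thesis using pB pq by (auto simp: insert_commute)
    next
      case False
      hence qB: "q \<in> B" using a pq by blast
      obtain z where z: "z \<in> A" using AB by blast
      have "(z,p) \<in> edges X" "(z,q) \<in> edges X" using z pB qB AB by blast+
      thus ?thesis using good_notri[OF g _ pq(2)] by blast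
    qed
  qed
qed

lemma adj_char:
  assumes g: "good X c" and a: "a \<in> atoms X" and b: "b \<in> atoms X" and ab: "a \<noteq> b"
  shows "a \<inter> b \<noteq> {} \<longleftrightarrow> (\<exists>u\<in>Cset X. a \<subseteq> u \<and> b \<subseteq> u \<and> (\<forall>d\<in>atoms X. d \<subseteq> u \<longrightarrow> d = a \<or> d = b))"
proof
  assume "a \<inter> b \<noteq> {}"
  then obtain x where x: "x \<in> a" "x \<in> b" by blast
  obtain q where q: "a = {x,q}" "(x,q) \<in> edges X" using atom_pt[OF g a x(1)] by blast
  obtain s where s: "b = {x,s}" "(x,s) \<in> edges X" using atom_pt[OF g b x(2)] by blast
  have qs: "q \<noteq> s" using ab q s by auto
  have uC: "{x} \<union> {q,s} \<in> Cset X" using q s by (intro CsetI) auto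
  moreover have ud: "\<forall>d\<in>atoms X. d \<subseteq> {x} \<union> {q,s} \<longrightarrow> d = a \<or> d = b"
  proof (intro ballI impI)
    fix d assume d: "d \<in> atoms X" "d \<subseteq> {x} \<union> {q,s}"
    show "d = a \<or> d = b"
    proof (cases "x \<in> d")
      case True
      obtain w where w: "d = {x,w}" "(x,w) \<in> edges X" "x \<noteq> w" using atom_pt[OF g d(1) True] by blast
      hence "w = q \<or> w = s" using d by auto
      thus ?thesis using w q s by auto
    next
      case False
      obtain t v where tv: "d = {t,v}" "(t,v) \<in> edges X" using d unfolding atoms_def by blast
      have "t \<noteq> v" using good_edge[OF g tv(2)] by simp
      hence "(t = q \<and> v = s) \<or> (t = s \<and> v = q)" using tv d False by auto
      hence "(q,s) \<in> edges X" using tv edge_sym_iff[OF g] by blast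
      thus ?thesis using good_notri[OF g q(2) _ s(2)] by blast
    qed
  qed
  moreover have "a \<subseteq> {x} \<union> {q,s}" "b \<subseteq> {x} \<union> {q,s}" using q s by auto
  ultimately show "\<exists>u\<in>Cset X. a \<subseteq> u \<and> b \<subseteq> u \<and> (\<forall>d\<in>atoms X. d \<subseteq> u \<longrightarrow> d = a \<or> d = b)"
    by blast
next
  assume "\<exists>u\<in>Cset X. a \<subseteq> u \<and> b \<subseteq> u \<and> (\<forall>d\<in>atoms X. d \<subseteq> u \<longrightarrow> d = a \<or> d = b)"
  then obtain u where u: "u \<in> Cset X" "a \<subseteq> u" "b \<subseteq> u" and ud: "\<forall>d\<in>atoms X. d \<subseteq> u \<longrightarrow> d = a \<or> d = b"
    by blast
  obtain A B where h: "A \<noteq> {}" "B \<noteq> {}" "u = A \<union> B" "A \<times> B \<subseteq> edges X" using u unfolding Cset_def by blast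
  show "a \<inter> b \<noteq> {}"
  proof
    assume dis: "a \<inter> b = {}"
    obtain a1 a2 where a12: "a = {a1,a2}" "a1 \<in> A" "a2 \<in> B" using split_atom[OF g h(4,1,2) a] u h by blast
    obtain b1 b2 where b12: "b = {b1,b2}" "b1 \<in> A" "b2 \<in> B" using split_atom[OF g h(4,1,2) b] u h by blast
    have e: "(a1,b2) \<in> edges X" using a12 b12 h by blast
    have "{a1,b2} \<in> atoms X" using atom_edge[OF e] .
    moreover have "{a1,b2} \<subseteq> u" using a12 b12 h by blast
    ultimately have "{a1,b2} = a \<or> {a1,b2} = b" using ud by blast
    thus False using dis a12 b12 by auto
  qed
qed

definition piso :: "('u set \<Rightarrow> 'w set) \<Rightarrow> 'u set set \<Rightarrow> 'w set set \<Rightarrow> bool" where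
  "piso \<phi> P Q \<longleftrightarrow> bij_betw \<phi> P Q \<and> (\<forall>S\<in>P. \<forall>T\<in>P. S \<subseteq> T \<longleftrightarrow> \<phi> S \<subseteq> \<phi> T)"

lemma piso_atoms:
  assumes gX: "good X c" and gY: "good Y d" and p: "piso \<phi> (Cset X) (Cset Y)"
    and a: "a \<in> Cset X"
  shows "a \<in> atoms X \<longleftrightarrow> \<phi> a \<in> atoms Y"
proof -
  have b: "bij_betw \<phi> (Cset X) (Cset Y)" and le: "\<forall>S\<in>Cset X. \<forall>T\<in>Cset X. S \<subseteq> T \<longleftrightarrow> \<phi> S \<subseteq> \<phi> T"
    using p by (auto simp: piso_def)
  have pa: "\<phi> a \<in> Cset Y" using a b bij_betwE by blast
  have "(\<forall>b\<in>Cset X. b \<subseteq> a \<longrightarrow> b = a) \<longleftrightarrow> (\<forall>b'\<in>Cset Y. b' \<subseteq> \<phi> a \<longrightarrow> b' = \<phi> a)"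
  proof
    assume h: "\<forall>b\<in>Cset X. b \<subseteq> a \<longrightarrow> b = a"
    show "\<forall>b'\<in>Cset Y. b' \<subseteq> \<phi> a \<longrightarrow> b' = \<phi> a"
    proof (intro ballI impI)
      fix b' assume b': "b' \<in> Cset Y" "b' \<subseteq> \<phi> a"
      obtain bb where bb: "bb \<in> Cset X" "b' = \<phi> bb" using b' b by (metis bij_betw_imp_surj_on imageE)
      have "bb \<subseteq> a" using le bb a b' by blast
      thus "b' = \<phi> a" using h bb by blast
    qed
  next
    assume h: "\<forall>b'\<in>Cset Y. b' \<subseteq> \<phi> a \<longrightarrow> b' = \<phi> a"
    show "\<forall>b\<in>Cset X. b \<subseteq> a \<longrightarrow> b = a"
    proof (intro ballI impI)
      fix bb assume bb: "bb \<in> Cset X" "bb \<subseteq> a"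
      have "\<phi> bb \<in> Cset Y" using bb b bij_betwE by blast
      moreover have "\<phi> bb \<subseteq> \<phi> a" using le bb a by blast
      ultimately have "\<phi> bb = \<phi> a" using h by blast
      thus "bb = a" using b bb a unfolding bij_betw_def inj_on_def by blast
    qed
  qed
  thus ?thesis unfolding atoms_min[OF gX, of a] atoms_min[OF gY, of "\<phi> a"] using a pa by simp
qed

lemma piso_ipres:
  assumes gX: "good X c" and gY: "good Y d" and p: "piso \<phi> (Cset X) (Cset Y)"
  shows "ipres \<phi> (atoms X) (atoms Y)"
proof -
  have b: "bij_betw \<phi> (Cset X) (Cset Y)" and le: "\<forall>S\<in>Cset X. \<forall>T\<in>Cset X. S \<subseteq> T \<longleftrightarrow> \<phi> S \<subseteq> \<phi> T"
    using p by (auto simp: piso_def)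
  have inj: "inj_on \<phi> (Cset X)" using b by (simp add: bij_betw_def)
  have sub: "atoms X \<subseteq> Cset X" "atoms Y \<subseteq> Cset Y" using atom_C by blast+
  have img: "\<phi> ` atoms X = atoms Y"
  proof
    show "\<phi> ` atoms X \<subseteq> atoms Y" using piso_atoms[OF gX gY p] sub by blast
    show "atoms Y \<subseteq> \<phi> ` atoms X"
    proof
      fix y assume y: "y \<in> atoms Y"
      obtain x where x: "x \<in> Cset X" "y = \<phi> x" using y sub b by (metis bij_betw_imp_surj_on imageE subsetD)
      hence "x \<in> atoms X" using piso_atoms[OF gX gY p x(1)] y by simp
      thus "y \<in> \<phi> ` atoms X" using x by blast
    qed
  qed
  have bb: "bij_betw \<phi> (atoms X) (atoms Y)" using img inj_on_subset[OF inj sub(1)] by (simp add: bij_betw_def)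
  have "\<forall>a\<in>atoms X. \<forall>b\<in>atoms X. a \<inter> b \<noteq> {} \<longleftrightarrow> \<phi> a \<inter> \<phi> b \<noteq> {}"
  proof (intro ballI)
    fix a bt assume a: "a \<in> atoms X" and bt: "bt \<in> atoms X"
    show "a \<inter> bt \<noteq> {} \<longleftrightarrow> \<phi> a \<inter> \<phi> bt \<noteq> {}"
    proof (cases "a = bt")
      case True
      have "\<phi> a \<in> atoms Y" using a img by blast
      hence "a \<noteq> {}" "\<phi> a \<noteq> {}" using a atom_ne by blast+
      thus ?thesis using True by simp
    next
      case False
      have ac: "a \<in> Cset X" "bt \<in> Cset X" using a bt sub by blast+
      have ne: "\<phi> a \<noteq> \<phi> bt" using False inj ac unfolding inj_on_def by blast
      have pa: "\<phi> a \<in> atoms Y" "\<phi> bt \<in> atoms Y" using a bt img by blast+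
      have "(\<exists>u\<in>Cset X. a \<subseteq> u \<and> bt \<subseteq> u \<and> (\<forall>d\<in>atoms X. d \<subseteq> u \<longrightarrow> d = a \<or> d = bt)) \<longleftrightarrow>
            (\<exists>u\<in>Cset Y. \<phi> a \<subseteq> u \<and> \<phi> bt \<subseteq> u \<and> (\<forall>d\<in>atoms Y. d \<subseteq> u \<longrightarrow> d = \<phi> a \<or> d = \<phi> bt))"
      proof
        assume "\<exists>u\<in>Cset X. a \<subseteq> u \<and> bt \<subseteq> u \<and> (\<forall>d\<in>atoms X. d \<subseteq> u \<longrightarrow> d = a \<or> d = bt)"
        then obtain u where u: "u \<in> Cset X" "a \<subseteq> u" "bt \<subseteq> u" and ud: "\<forall>d\<in>atoms X. d \<subseteq> u \<longrightarrow> d = a \<or> d = bt"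
          by blast
        have "\<phi> u \<in> Cset Y" using u b bij_betwE by blast
        moreover have "\<phi> a \<subseteq> \<phi> u" "\<phi> bt \<subseteq> \<phi> u" using le u ac by blast+
        moreover have "\<forall>d\<in>atoms Y. d \<subseteq> \<phi> u \<longrightarrow> d = \<phi> a \<or> d = \<phi> bt"
        proof (intro ballI impI)
          fix d assume d: "d \<in> atoms Y" "d \<subseteq> \<phi> u"
          obtain e where e: "e \<in> atoms X" "d = \<phi> e" using d img by blast
          have "e \<subseteq> u" using le e d u sub by blast
          thus "d = \<phi> a \<or> d = \<phi> bt" using ud e by blast
        qed
        ultimately show "\<exists>u\<in>Cset Y. \<phi> a \<subseteq> u \<and> \<phi> bt \<subseteq> u \<and> (\<forall>d\<in>atoms Y. d \<subseteq> u \<longrightarrow> d = \<phi> a \<or> d = \<phi> bt)"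
          by blast
      next
        assume "\<exists>u\<in>Cset Y. \<phi> a \<subseteq> u \<and> \<phi> bt \<subseteq> u \<and> (\<forall>d\<in>atoms Y. d \<subseteq> u \<longrightarrow> d = \<phi> a \<or> d = \<phi> bt)"
        then obtain u' where u': "u' \<in> Cset Y" "\<phi> a \<subseteq> u'" "\<phi> bt \<subseteq> u'" and ud: "\<forall>d\<in>atoms Y. d \<subseteq> u' \<longrightarrow> d = \<phi> a \<or> d = \<phi> bt"
          by blast
        obtain u where u: "u \<in> Cset X" "u' = \<phi> u" using u' b by (metis bij_betw_imp_surj_on imageE)
        have "a \<subseteq> u" "bt \<subseteq> u" using le u u' ac by blast+
        moreover have "\<forall>d\<in>atoms X. d \<subseteq> u \<longrightarrow> d = a \<or> d = bt"
        proof (intro ballI impI)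
          fix e assume e: "e \<in> atoms X" "e \<subseteq> u"
          have "\<phi> e \<subseteq> u'" using le e u sub by blast
          moreover have "\<phi> e \<in> atoms Y" using e img by blast
          ultimately have "\<phi> e = \<phi> a \<or> \<phi> e = \<phi> bt" using ud by blast
          thus "e = a \<or> e = bt" using inj e ac sub unfolding inj_on_def by blast
        qed
        ultimately show "\<exists>u\<in>Cset X. a \<subseteq> u \<and> bt \<subseteq> u \<and> (\<forall>d\<in>atoms X. d \<subseteq> u \<longrightarrow> d = a \<or> d = bt)"
          using u by blast
      qed
      thus ?thesis using adj_char[OF gX a bt False] adj_char[OF gY pa ne] by simp
    qed
  qed
  thus ?thesis using bb by (simp add: ipres_def)
qed



lemma star_sub: "star X x \<subseteq> atoms X" unfolding star_def by blast

lemma ex_star: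
  assumes gX: "good X c" and gY: "good Y d" and ip: "ipres \<psi> (atoms X) (atoms Y)" and x: "x \<in> verts X"
  shows "\<exists>y\<in>verts Y. \<psi>`star X x = star Y y"
proof -
  have "StarP (atoms X) (star X x)" using StarP_iff[OF gX] x by blast
  hence "StarP (atoms Y) (\<psi>`star X x)" using StarP_img[OF ip star_sub] by blast
  thus ?thesis using StarP_iff[OF gY] by blast
qed

lemma ex_star_inv:
  assumes gX: "good X c" and gY: "good Y d" and ip: "ipres \<psi> (atoms X) (atoms Y)" and y: "y \<in> verts Y"
  shows "\<exists>x\<in>verts X. \<psi>`star X x = star Y y"
proof -
  have ip': "ipres (inv_into (atoms X) \<psi>) (atoms Y) (atoms X)" by (rule ipres_inv[OF ip])
  obtain x where x: "x \<in> verts X" "inv_into (atoms X) \<psi> ` star Y y = star X x"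
    using ex_star[OF gY gX ip' y] by blast
  have b: "bij_betw \<psi> (atoms X) (atoms Y)" using ip by (simp add: ipres_def)
  have "star Y y \<subseteq> \<psi> ` atoms X" using star_sub b by (metis bij_betw_imp_surj_on)
  have "\<psi> ` (inv_into (atoms X) \<psi> ` star Y y) = star Y y"
    by (rule image_inv_into_cancel[OF bij_betw_imp_surj_on[OF b] star_sub])
  thus ?thesis using x by metis
qed

lemma edge_star:
  assumes g: "good X c" and x: "x \<in> verts X" and x': "x' \<in> verts X"
  shows "(x,x') \<in> edges X \<longleftrightarrow> x \<noteq> x' \<and> star X x \<inter> star X x' \<noteq> {}"
proof
  assume e: "(x,x') \<in> edges X"
  have "{x,x'} \<in> star X x" "{x,x'} \<in> star X x'" using atom_edge[OF e] unfolding star_def by auto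
  thus "x \<noteq> x' \<and> star X x \<inter> star X x' \<noteq> {}" using good_edge[OF g e] by blast
next
  assume h: "x \<noteq> x' \<and> star X x \<inter> star X x' \<noteq> {}"
  then obtain a where a: "a \<in> atoms X" "x \<in> a" "x' \<in> a" unfolding star_def by blast
  obtain y where y: "a = {x,y}" "(x,y) \<in> edges X" "x \<noteq> y" using atom_pt[OF g a(1,2)] by blast
  hence "y = x'" using a h by auto
  thus "(x,x') \<in> edges X" using y by simp
qed

lemma K2_lemma:
  assumes g: "good X c" and u: "u \<in> verts X" "u' \<in> verts X" "u \<noteq> u'" and eq: "star X u = star X u'"
  shows "star X u = {{u,u'}}" "(u,u') \<in> edges X" "c u \<noteq> c u'"
proof -
  have ne: "star X u \<noteq> {}" using star_ne[OF g u(1)] .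
  have all: "\<forall>a\<in>star X u. a = {u,u'}"
  proof
    fix a assume "a \<in> star X u"
    hence "a \<in> atoms X" "u \<in> a" "u' \<in> a" using eq unfolding star_def by auto
    thus "a = {u,u'}" using atom_two[OF g] u(3) by blast
  qed
  have sub: "star X u \<subseteq> {{u,u'}}" using all by blast
  show "star X u = {{u,u'}}" using subset_singletonD[OF sub] ne by blast
  have "(u,u') \<in> edges X" using edge_star[OF g u(1,2)] u(3) eq ne by simp
  thus "(u,u') \<in> edges X" .
  thus "c u \<noteq> c u'" using good_edge[OF g] by blast
qed

lemma Lp:
  assumes gX: "good X c" and gY: "good Y d" and ip: "ipres \<psi> (atoms X) (atoms Y)"
    and s: "star X x = {a}" "star X x' = {a}" "a = {x,x'}" and v: "v \<in> verts Y" and pa: "\<psi> a \<in> star Y v"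
  shows "star Y v = {\<psi> a}"
proof -
  obtain x0 where x0: "x0 \<in> verts X" "\<psi>`star X x0 = star Y v" using ex_star_inv[OF gX gY ip v] by blast
  have inj: "inj_on \<psi> (atoms X)" using ip by (simp add: ipres_def bij_betw_def)
  have aA: "a \<in> atoms X" using s unfolding star_def by blast
  have "\<psi> a \<in> \<psi>`star X x0" using pa x0 by simp
  hence "a \<in> star X x0" using inj_on_image_mem_iff[OF inj aA star_sub] by blast
  hence "x0 \<in> a" unfolding star_def by blast
  hence "star X x0 = {a}" using s by auto
  thus ?thesis using x0 by simp
qed

lemma key_K2:
  assumes gX: "good X c" and gY: "good Y d" and ip: "ipres \<psi> (atoms X) (atoms Y)"
    and x: "x \<in> verts X" "x' \<in> verts X" "x \<noteq> x'" and eq: "star X x = star X x'"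
  shows "\<exists>y\<in>verts Y. \<psi>`star X x = star Y y \<and> d y = c x"
proof -
  have s: "star X x = {{x,x'}}" using K2_lemma[OF gX x eq] by blast
  define a where "a = {x,x'}"
  have aA: "a \<in> atoms X" using s unfolding a_def star_def by blast
  have b: "bij_betw \<psi> (atoms X) (atoms Y)" using ip by (simp add: ipres_def)
  have pa: "\<psi> a \<in> atoms Y" using aA b bij_betwE by blast
  obtain p q where pq: "\<psi> a = {p,q}" "(p,q) \<in> edges Y" using pa unfolding atoms_def by blast
  have pqv: "p \<in> verts Y" "q \<in> verts Y" "d p \<noteq> d q" using good_edge[OF gY pq(2)] by auto
  have sp: "\<psi> a \<in> star Y p" "\<psi> a \<in> star Y q" using pa pq unfolding star_def by auto
  have s2: "star X x = {a}" "star X x' = {a}" using s eq a_def by auto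
  have "star Y p = {\<psi> a}" "star Y q = {\<psi> a}"
    using Lp[OF gX gY ip s2 a_def pqv(1) sp(1)] Lp[OF gX gY ip s2 a_def pqv(2) sp(2)] by auto
  moreover have "\<psi>`star X x = {\<psi> a}" using s2 by simp
  ultimately show ?thesis using pqv by (cases "d p = c x") auto
qed

theorem recon:
  assumes gX: "good X c" and gY: "good Y d" and ip: "ipres \<psi> (atoms X) (atoms Y)"
  shows "graph_iso X Y"
proof -
  define P where "P x y \<longleftrightarrow> y \<in> verts Y \<and> \<psi>`star X x = star Y y" for x y
  define f where "f x = (if \<exists>y. P x y \<and> d y = c x then SOME y. P x y \<and> d y = c x else SOME y. P x y)" for x
  have fP: "P x (f x)" if x: "x \<in> verts X" for x
  proof (cases "\<exists>y. P x y \<and> d y = c x")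
    case True
    hence "P x (SOME y. P x y \<and> d y = c x) \<and> d (SOME y. P x y \<and> d y = c x) = c x" by (rule someI_ex)
    moreover have "f x = (SOME y. P x y \<and> d y = c x)" unfolding f_def using True by (rule if_P)
    ultimately show ?thesis by simp
  next
    case False
    have "\<exists>y. P x y" using ex_star[OF gX gY ip x] unfolding P_def by blast
    hence "P x (SOME y. P x y)" by (rule someI_ex)
    moreover have "f x = (SOME y. P x y)" unfolding f_def using False by (rule if_not_P)
    ultimately show ?thesis by simp
  qed
  have fc: "d (f x) = c x" if x: "\<exists>y. P x y \<and> d y = c x" for x
  proof -
    have "P x (SOME y. P x y \<and> d y = c x) \<and> d (SOME y. P x y \<and> d y = c x) = c x" using x by (rule someI_ex)
    moreover have "f x = (SOME y. P x y \<and> d y = c x)" unfolding f_def using x by (rule if_P)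
    ultimately show ?thesis by simp
  qed
  have inj: "inj_on \<psi> (atoms X)" using ip by (simp add: ipres_def bij_betw_def)
  have starinj: "star X x = star X x'" if "\<psi>`star X x = \<psi>`star X x'" for x x'
    using that inj star_sub inj_on_image_eq_iff by metis
  have finj: "inj_on f (verts X)"
  proof (rule inj_onI)
    fix x x' assume x: "x \<in> verts X" "x' \<in> verts X" and e: "f x = f x'"
    show "x = x'"
    proof (rule ccontr)
      assume ne: "x \<noteq> x'"
      have "\<psi>`star X x = \<psi>`star X x'" using fP[OF x(1)] fP[OF x(2)] e unfolding P_def by simp
      hence eq: "star X x = star X x'" by (rule starinj)
      have "c x \<noteq> c x'" using K2_lemma[OF gX x ne eq] by blast
      moreover have "d (f x) = c x" using key_K2[OF gX gY ip x ne eq] fc unfolding P_def by blast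
      moreover have "d (f x') = c x'" using key_K2[OF gX gY ip x(2,1) _ eq[symmetric]] ne fc unfolding P_def by blast
      ultimately show False using e by simp
    qed
  qed
  have fsurj: "f ` verts X = verts Y"
  proof
    show "f ` verts X \<subseteq> verts Y" using fP unfolding P_def by blast
    show "verts Y \<subseteq> f ` verts X"
    proof
      fix y assume y: "y \<in> verts Y"
      obtain x where x: "x \<in> verts X" "\<psi>`star X x = star Y y" using ex_star_inv[OF gX gY ip y] by blast
      have y': "f x \<in> verts Y" "star Y (f x) = star Y y" using fP[OF x(1)] x unfolding P_def by auto
      show "y \<in> f ` verts X"
      proof (cases "f x = y")
        case True thus ?thesis using x by blast
      next
        case False
        have sy: "star Y y = {{y, f x}}" using K2_lemma[OF gY y y'(1)] False y'(2) by metis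
        obtain a where a: "a \<in> star X x" "\<psi> a = {y, f x}" using x sy by (metis imageE insertI1)
        have aA: "a \<in> atoms X" "x \<in> a" using a unfolding star_def by auto
        obtain x'' where x'': "a = {x,x''}" "(x,x'') \<in> edges X" "x \<noteq> x''" using atom_pt[OF gX aA] by blast
        have x''v: "x'' \<in> verts X" using good_edge[OF gX x''(2)] by blast
        have ip': "ipres (inv_into (atoms X) \<psi>) (atoms Y) (atoms X)" by (rule ipres_inv[OF ip])
        have b: "bij_betw \<psi> (atoms X) (atoms Y)" using ip by (simp add: ipres_def)
        have ia: "inv_into (atoms X) \<psi> {y, f x} = a" using a aA b by (metis bij_betw_inv_into_left)
        have sy2: "star Y y = {{y, f x}}" "star Y (f x) = {{y, f x}}" using sy y' by auto
        have "a \<in> star X x''" using aA x'' unfolding star_def by auto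
        hence "star X x'' = {inv_into (atoms X) \<psi> {y, f x}}"
          using Lp[OF gY gX ip' sy2 refl x''v] ia by simp
        hence sx'': "star X x'' = {a}" using ia by simp
        have "star X x \<subseteq> {a}"
        proof
          fix e assume e: "e \<in> star X x"
          hence "\<psi> e \<in> star Y y" using x by blast
          hence "\<psi> e = \<psi> a" using sy a by simp
          moreover have "e \<in> atoms X" using e star_sub[of X x] by blast
          ultimately show "e \<in> {a}" using inj aA unfolding inj_on_def by blast
        qed
        hence "star X x = {a}" using a(1) by blast
        hence eqs: "star X x = star X x''" using sx'' by simp
        have fne: "f x'' \<noteq> f x" using finj x(1) x''v x''(3) unfolding inj_on_def by metis
        have "star Y (f x'') = star Y (f x)" using fP[OF x''v] fP[OF x(1)] eqs unfolding P_def by simp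
        moreover have "f x'' \<in> verts Y" using fP[OF x''v] unfolding P_def by simp
        ultimately have "f x'' \<in> {y, f x}" using star_ne[OF gY] sy2 unfolding star_def by blast
        hence "f x'' = y" using fne by blast
        thus ?thesis using x''v by blast
      qed
    qed
  qed
  have edge: "(x,x') \<in> edges X \<longleftrightarrow> (f x, f x') \<in> edges Y" if x: "x \<in> verts X" "x' \<in> verts X" for x x'
  proof -
    have fv: "f x \<in> verts Y" "f x' \<in> verts Y" "star Y (f x) = \<psi>`star X x" "star Y (f x') = \<psi>`star X x'"
      using fP[OF x(1)] fP[OF x(2)] unfolding P_def by auto
    have "\<psi>`star X x \<inter> \<psi>`star X x' = \<psi>`(star X x \<inter> star X x')"
      using inj star_sub by (metis inj_on_image_Int)
    moreover have "x \<noteq> x' \<longleftrightarrow> f x \<noteq> f x'" using finj x unfolding inj_on_def by metis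
    ultimately show ?thesis using edge_star[OF gX x] edge_star[OF gY fv(1,2)] fv(3,4) by simp
  qed
  show ?thesis unfolding graph_iso_def using finj fsurj edge by (metis bij_betw_def)
qed



lemma poset_iso_sym:
  assumes "poset_iso A le B le'" shows "poset_iso B le' A le"
proof -
  obtain f where f: "bij_betw f A B" "\<forall>x\<in>A. \<forall>y\<in>A. le x y \<longleftrightarrow> le' (f x) (f y)"
    using assms unfolding poset_iso_def by blast
  have bi: "bij_betw (inv_into A f) B A" using f(1) by (rule bij_betw_inv_into)
  have "\<forall>x\<in>B. \<forall>y\<in>B. le' x y \<longleftrightarrow> le (inv_into A f x) (inv_into A f y)"
  proof (intro ballI)
    fix x y assume x: "x \<in> B" and y: "y \<in> B"
    have "inv_into A f x \<in> A" "inv_into A f y \<in> A" using bi x y bij_betwE by blast+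
    moreover have "f (inv_into A f x) = x" "f (inv_into A f y) = y"
      using f(1) x y by (meson bij_betw_inv_into_right)+
    ultimately show "le' x y \<longleftrightarrow> le (inv_into A f x) (inv_into A f y)" using f(2) by metis
  qed
  thus ?thesis using bi unfolding poset_iso_def by blast
qed

lemma poset_iso_trans:
  assumes "poset_iso A le B le'" "poset_iso B le' C le''" shows "poset_iso A le C le''"
proof -
  obtain f where f: "bij_betw f A B" "\<forall>x\<in>A. \<forall>y\<in>A. le x y \<longleftrightarrow> le' (f x) (f y)"
    using assms(1) unfolding poset_iso_def by blast
  obtain g where g: "bij_betw g B C" "\<forall>x\<in>B. \<forall>y\<in>B. le' x y \<longleftrightarrow> le'' (g x) (g y)"
    using assms(2) unfolding poset_iso_def by blast
  have "bij_betw (g \<circ> f) A C" using f(1) g(1) by (rule bij_betw_trans)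
  moreover have "\<forall>x\<in>A. \<forall>y\<in>A. le x y \<longleftrightarrow> le'' ((g \<circ> f) x) ((g \<circ> f) y)"
  proof (intro ballI)
    fix x y assume x: "x \<in> A" and y: "y \<in> A"
    have "f x \<in> B" "f y \<in> B" using f(1) x y bij_betwE by blast+
    thus "le x y \<longleftrightarrow> le'' ((g \<circ> f) x) ((g \<circ> f) y)" using f(2) g(2) x y by simp
  qed
  ultimately show ?thesis unfolding poset_iso_def by blast
qed

lemma piso_of: "poset_iso P (\<subseteq>) Q (\<subseteq>) \<Longrightarrow> \<exists>\<phi>. piso \<phi> P Q"
  unfolding poset_iso_def piso_def by blast

lemma Cset_sub: assumes "is_graph X" "S \<in> Cset X" shows "S \<subseteq> verts X"
  using assms unfolding Cset_def is_graph_def by blast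

lemma Cimg:
  assumes gX: "is_graph X" and b: "bij_betw g (verts X) (verts Y)"
    and e: "\<forall>x\<in>verts X. \<forall>y\<in>verts X. (x, y) \<in> edges X \<longleftrightarrow> (g x, g y) \<in> edges Y"
    and S: "S \<in> Cset X"
  shows "g`S \<in> Cset Y"
proof -
  obtain A B where h: "A \<noteq> {}" "B \<noteq> {}" "S = A \<union> B" "A \<times> B \<subseteq> edges X" using S unfolding Cset_def by blast
  have AB: "A \<subseteq> verts X" "B \<subseteq> verts X" using Cset_sub[OF gX S] h by auto
  have "g`A \<times> g`B \<subseteq> edges Y"
  proof
    fix z assume "z \<in> g`A \<times> g`B"
    then obtain a bb where "a \<in> A" "bb \<in> B" "z = (g a, g bb)" by blast
    thus "z \<in> edges Y" using h(4) e AB by blast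
  qed
  moreover have "g`S = g`A \<union> g`B" using h by auto
  ultimately show ?thesis using h CsetI by (metis image_is_empty)
qed

lemma giso_C:
  assumes gX: "is_graph X" and gY: "is_graph Y" and gi: "graph_iso X Y"
  shows "poset_iso (Cset X) (\<subseteq>) (Cset Y) (\<subseteq>)"
proof -
  obtain g where b: "bij_betw g (verts X) (verts Y)"
    and e: "\<forall>x\<in>verts X. \<forall>y\<in>verts X. (x, y) \<in> edges X \<longleftrightarrow> (g x, g y) \<in> edges Y"
    using gi unfolding graph_iso_def by blast
  define g' where "g' = inv_into (verts X) g"
  have b': "bij_betw g' (verts Y) (verts X)" unfolding g'_def using b by (rule bij_betw_inv_into)
  have gg': "\<And>y. y \<in> verts Y \<Longrightarrow> g (g' y) = y" unfolding g'_def using b by (meson bij_betw_inv_into_right)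
  have g'g: "\<And>x. x \<in> verts X \<Longrightarrow> g' (g x) = x" unfolding g'_def using b by (meson bij_betw_inv_into_left)
  have e': "\<forall>x\<in>verts Y. \<forall>y\<in>verts Y. (x, y) \<in> edges Y \<longleftrightarrow> (g' x, g' y) \<in> edges X"
  proof (intro ballI)
    fix x y assume x: "x \<in> verts Y" and y: "y \<in> verts Y"
    have "g' x \<in> verts X" "g' y \<in> verts X" using b' x y bij_betwE by blast+
    thus "(x, y) \<in> edges Y \<longleftrightarrow> (g' x, g' y) \<in> edges X" using e gg' x y by metis
  qed
  have "bij_betw ((`) g) (Cset X) (Cset Y)"
  proof (rule bij_betw_byWitness[where f'="(`) g'"])
    show "\<forall>S\<in>Cset X. g' ` g ` S = S"
    proof
      fix S assume "S \<in> Cset X"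
      hence "S \<subseteq> verts X" using Cset_sub[OF gX] by blast
      thus "g' ` g ` S = S" using g'g by (force simp: image_image)
    qed
    show "\<forall>S\<in>Cset Y. g ` g' ` S = S"
    proof
      fix S assume "S \<in> Cset Y"
      hence "S \<subseteq> verts Y" using Cset_sub[OF gY] by blast
      thus "g ` g' ` S = S" using gg' by (force simp: image_image)
    qed
    show "(`) g ` Cset X \<subseteq> Cset Y" using Cimg[OF gX b e] by blast
    show "(`) g' ` Cset Y \<subseteq> Cset X" using Cimg[OF gY b' e'] by blast
  qed
  moreover have "\<forall>S\<in>Cset X. \<forall>T\<in>Cset X. S \<subseteq> T \<longleftrightarrow> g`S \<subseteq> g`T"
  proof (intro ballI)
    fix S T assume "S \<in> Cset X" "T \<in> Cset X"
    hence "S \<subseteq> verts X" "T \<subseteq> verts X" using Cset_sub[OF gX] by blast+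
    moreover have "inj_on g (verts X)" using b by (simp add: bij_betw_def)
    ultimately show "S \<subseteq> T \<longleftrightarrow> g`S \<subseteq> g`T"
    proof (intro iffI)
      assume st: "g`S \<subseteq> g`T" and v: "S \<subseteq> verts X" "T \<subseteq> verts X" "inj_on g (verts X)"
      show "S \<subseteq> T"
      proof
        fix x assume x: "x \<in> S"
        hence "g x \<in> g`T" using st by blast
        thus "x \<in> T" using inj_on_image_mem_iff[OF v(3) _ v(2)] x v(1) by blast
      qed
    qed auto
  qed
  ultimately show ?thesis unfolding poset_iso_def by blast
qed



lemma tensor_edges:
  "((i,v),(j,w)) \<in> edges (tensor K2 G) \<longleftrightarrow> ((i = 1 \<and> j = 2) \<or> (i = 2 \<and> j = 1)) \<and> (v,w) \<in> edges G"
  by (auto simp: tensor_def edges_def K2_def)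

lemma tensor_verts: "verts (tensor K2 G) = {1,2} \<times> verts G"
  by (simp add: tensor_def verts_def K2_def)

lemma is_graph_tensor:
  assumes g: "is_graph G" shows "is_graph (tensor K2 G)"
proof -
  have eG: "edges G \<subseteq> verts G \<times> verts G" "sym (edges G)" using g by (auto simp: is_graph_def)
  have "edges (tensor K2 G) \<subseteq> verts (tensor K2 G) \<times> verts (tensor K2 G)"
  proof
    fix z assume z: "z \<in> edges (tensor K2 G)"
    obtain i v j w where zz: "z = ((i,v),(j,w))" by (metis prod.exhaust)
    have "((i,v),(j,w)) \<in> edges (tensor K2 G)" using z zz by simp
    hence "((i = 1 \<and> j = 2) \<or> (i = 2 \<and> j = 1)) \<and> (v,w) \<in> edges G" by (simp only: tensor_edges)
    thus "z \<in> verts (tensor K2 G) \<times> verts (tensor K2 G)" using zz eG(1) by (auto simp: tensor_verts)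
  qed
  moreover have "sym (edges (tensor K2 G))"
  proof (rule symI)
    fix z z' assume z: "(z, z') \<in> edges (tensor K2 G)"
    obtain i v j w where "z = (i,v)" "z' = (j,w)" by (metis prod.exhaust)
    thus "(z', z) \<in> edges (tensor K2 G)" using z eG(2) by (auto simp: tensor_edges dest: symD)
  qed
  ultimately show ?thesis unfolding is_graph_def by blast
qed

lemma good_tensor:
  assumes g: "is_graph G" and n: "no_isolated G"
  shows "good (tensor K2 G) (\<lambda>p. fst p = (1::nat))"
proof -
  have "is_graph (tensor K2 G)" by (rule is_graph_tensor[OF g])
  moreover have "no_isolated (tensor K2 G)"
    unfolding no_isolated_def
  proof
    fix z assume z: "z \<in> verts (tensor K2 G)"
    obtain i v where iv: "z = (i,v)" by (metis prod.exhaust)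
    have "(i,v) \<in> {1,2} \<times> verts G" using z iv by (simp add: tensor_verts)
    hence "v \<in> verts G" "i = 1 \<or> i = 2" by auto
    then obtain w where w: "(v,w) \<in> edges G" using n unfolding no_isolated_def nbhd_def by blast
    have "(z, (if i = 1 then 2 else 1, w)) \<in> edges (tensor K2 G)" using iv w \<open>i = 1 \<or> i = 2\<close>
      by (auto simp: tensor_edges)
    thus "nbhd (tensor K2 G) z \<noteq> {}" unfolding nbhd_def by blast
  qed
  moreover have "\<forall>p q. (p,q) \<in> edges (tensor K2 G) \<longrightarrow> (fst p = (1::nat)) \<noteq> (fst q = 1)"
  proof (intro allI impI)
    fix p q assume pq: "(p,q) \<in> edges (tensor K2 G)"
    obtain i v j w where "p = (i,v)" "q = (j,w)" by (metis prod.exhaust)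
    thus "(fst p = (1::nat)) \<noteq> (fst q = 1)" using pq by (auto simp: tensor_edges)
  qed
  ultimately show ?thesis unfolding good_def by blast
qed

definition at :: "'a set \<times> 'a set \<Rightarrow> (nat \<times> 'a) set" where
  "at p = {1} \<times> fst p \<union> {2} \<times> snd p"

lemma at_le: "at p \<subseteq> at q \<longleftrightarrow> box_le p q"
  unfolding at_def box_le_def by auto

lemma at_inj: "at p = at q \<Longrightarrow> p = q"
proof -
  assume h: "at p = at q"
  have "fst p = {v. (1,v) \<in> at p}" "snd p = {v. (2,v) \<in> at p}"
       "fst q = {v. (1,v) \<in> at q}" "snd q = {v. (2,v) \<in> at q}" unfolding at_def by auto
  thus "p = q" using h by (metis prod.expand)
qed

lemma at_C: assumes p: "p \<in> box G" shows "at p \<in> Cset (tensor K2 G)"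
proof -
  obtain \<sigma> \<tau> where st: "p = (\<sigma>,\<tau>)" "\<sigma> \<noteq> {}" "\<tau> \<noteq> {}" "\<sigma> \<times> \<tau> \<subseteq> edges G" using p unfolding box_def by blast
  have "({1::nat} \<times> \<sigma>) \<times> ({2} \<times> \<tau>) \<subseteq> edges (tensor K2 G)"
    using st(4) by (auto simp: tensor_edges)
  hence "{1::nat} \<times> \<sigma> \<union> {2} \<times> \<tau> \<in> Cset (tensor K2 G)" using st by (intro CsetI) auto
  thus ?thesis using st by (simp add: at_def)
qed

lemma C_at1:
  assumes g: "is_graph G" and AB: "A \<times> B \<subseteq> edges (tensor K2 G)" "A \<noteq> {}" "B \<noteq> {}"
    and a0: "a0 \<in> A" "fst a0 = 1"
  shows "\<exists>p\<in>box G. A \<union> B = at p"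
proof -
  have eG: "edges G \<subseteq> verts G \<times> verts G" using g by (auto simp: is_graph_def)
  obtain b0 where b0: "b0 \<in> B" using AB by blast
  have fB: "\<forall>b\<in>B. fst b = 2"
  proof
    fix b assume "b \<in> B"
    hence "(a0,b) \<in> edges (tensor K2 G)" using AB a0 by blast
    thus "fst b = 2" using a0 by (cases a0, cases b) (auto simp: tensor_edges)
  qed
  have fA: "\<forall>a\<in>A. fst a = 1"
  proof
    fix a assume "a \<in> A"
    hence "(a,b0) \<in> edges (tensor K2 G)" using AB b0 by blast
    thus "fst a = 1" using fB b0 by (cases a, cases b0) (auto simp: tensor_edges)
  qed
  define \<sigma> where "\<sigma> = snd`A"
  define \<tau> where "\<tau> = snd`B"
  have A: "A = {1} \<times> \<sigma>"
  proof
    show "A \<subseteq> {1} \<times> \<sigma>" using fA unfolding \<sigma>_def by (force)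
    show "{1} \<times> \<sigma> \<subseteq> A" using fA unfolding \<sigma>_def by (force)
  qed
  have B: "B = {2} \<times> \<tau>"
  proof
    show "B \<subseteq> {2} \<times> \<tau>" using fB unfolding \<tau>_def by (force)
    show "{2} \<times> \<tau> \<subseteq> B" using fB unfolding \<tau>_def by (force)
  qed
  have E: "\<sigma> \<times> \<tau> \<subseteq> edges G"
  proof
    fix z assume "z \<in> \<sigma> \<times> \<tau>"
    then obtain v w where "z = (v,w)" "(1,v) \<in> A" "(2,w) \<in> B" using A B by auto
    hence "((1,v),(2,w)) \<in> edges (tensor K2 G)" using AB by blast
    thus "z \<in> edges G" using \<open>z = (v,w)\<close> by (simp add: tensor_edges)
  qed
  have ne: "\<sigma> \<noteq> {}" "\<tau> \<noteq> {}" using AB unfolding \<sigma>_def \<tau>_def by auto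
  have "\<sigma> \<subseteq> verts G" "\<tau> \<subseteq> verts G" using E eG ne by blast+
  hence "(\<sigma>,\<tau>) \<in> box G" using ne E unfolding box_def by blast
  moreover have "A \<union> B = at (\<sigma>,\<tau>)" using A B by (simp add: at_def)
  ultimately show ?thesis by blast
qed

lemma C_at:
  assumes g: "is_graph G" and S: "S \<in> Cset (tensor K2 G)"
  shows "\<exists>p\<in>box G. S = at p"
proof -
  obtain A B where h: "A \<noteq> {}" "B \<noteq> {}" "S = A \<union> B" "A \<times> B \<subseteq> edges (tensor K2 G)" using S unfolding Cset_def by blast
  obtain a0 b0 where ab: "a0 \<in> A" "b0 \<in> B" using h by blast
  have e: "(a0,b0) \<in> edges (tensor K2 G)" using h ab by blast
  have sy: "sym (edges (tensor K2 G))" using is_graph_tensor[OF g] by (simp add: is_graph_def)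
  show ?thesis
  proof (cases "fst a0 = 1")
    case True thus ?thesis using C_at1[OF g h(4,1,2) ab(1)] h by blast
  next
    case False
    hence "fst b0 = 1" using e by (cases a0, cases b0) (auto simp: tensor_edges)
    moreover have "B \<times> A \<subseteq> edges (tensor K2 G)" using h(4) sy by (auto dest: symD)
    ultimately show ?thesis using C_at1[OF g _ h(2,1) ab(2)] h by (metis sup_commute)
  qed
qed

lemma box_C:
  assumes g: "is_graph G"
  shows "poset_iso (box G) box_le (Cset (tensor K2 G)) (\<subseteq>)"
proof -
  have "bij_betw at (box G) (Cset (tensor K2 G))"
    unfolding bij_betw_def
  proof
    show "inj_on at (box G)" using at_inj by (meson inj_onI)
    show "at ` box G = Cset (tensor K2 G)" using at_C C_at[OF g] by blast
  qed
  thus ?thesis unfolding poset_iso_def using at_le by blast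
qed

theorem theorem1p1:
  fixes G :: "'a graph" and H :: "'b graph"
  assumes "is_graph G" and "is_graph H"
    and "no_isolated G" and "no_isolated H"
  shows "graph_iso (tensor K2 G) (tensor K2 H) \<longleftrightarrow>
         poset_iso (box G) box_le (box H) box_le"
proof
  assume gi: "graph_iso (tensor K2 G) (tensor K2 H)"
  have "poset_iso (Cset (tensor K2 G)) (\<subseteq>) (Cset (tensor K2 H)) (\<subseteq>)"
    using giso_C[OF is_graph_tensor[OF assms(1)] is_graph_tensor[OF assms(2)] gi] .
  hence "poset_iso (box G) box_le (Cset (tensor K2 H)) (\<subseteq>)"
    using poset_iso_trans[OF box_C[OF assms(1)]] by blast
  thus "poset_iso (box G) box_le (box H) box_le"
    using poset_iso_trans poset_iso_sym[OF box_C[OF assms(2)]] by blast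
next
  assume pi: "poset_iso (box G) box_le (box H) box_le"
  have "poset_iso (Cset (tensor K2 G)) (\<subseteq>) (box H) box_le"
    using poset_iso_trans[OF poset_iso_sym[OF box_C[OF assms(1)]] pi] .
  hence "poset_iso (Cset (tensor K2 G)) (\<subseteq>) (Cset (tensor K2 H)) (\<subseteq>)"
    using poset_iso_trans box_C[OF assms(2)] by blast
  then obtain \<phi> where "piso \<phi> (Cset (tensor K2 G)) (Cset (tensor K2 H))" using piso_of by blast
  hence "ipres \<phi> (atoms (tensor K2 G)) (atoms (tensor K2 H))"
    using piso_ipres[OF good_tensor[OF assms(1,3)] good_tensor[OF assms(2,4)]] by blast
  thus "graph_iso (tensor K2 G) (tensor K2 H)"
    using recon[OF good_tensor[OF assms(1,3)] good_tensor[OF assms(2,4)]] by blast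
qed


end
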